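(* For any constants $\alpha_1,\dots,\alpha_4$, any smooth $H=H(t,t^-,q,q^-,p,p^-)$ and any smooth $\xi,\eta,\nu$ of $(t,q,p)$, the identity $$\Omega\equiv \xi\frac{\delta\tilde H}{\delta t}+\eta\frac{\delta\tilde H}{\delta q}+\nu\frac{\delta\tilde H}{\delta p}+D(C)+(1-S_+)P$$ holds, where $$\Omega= \nu^{-}(\alpha_{1}\dot{q}+\alpha_{2}\dot{q}^{-})+p^{-}(\alpha_{1}D(\eta)+\alpha_{2}D(\eta^{-}))+\nu(\alpha_{3}\dot{q}+\alpha_{4}\dot{q}^{-})+p(\alpha_{3}D(\eta)+\alpha_{4}D(\eta^{-}))+(\alpha_{2}p^{-}+\alpha_{4}p)\dot{q}^{-}D(\xi-\xi^{-})-\xi H_t-\eta H_q-\nu H_p-\xi^{-}H_{t^-}-\eta^{-}H_{q^-}-\nu^{-}H_{p^-}-HD(\xi),$$ $$C=\eta(\alpha_{4}p^{+}+(\alpha_{2}+\alpha_{3})p+\alpha_{1}p^{-})-\xi\big(\alpha_{2}(p\dot{q}-p^{-}\dot{q}^{-})+\alpha_{4}(p^{+}\dot{q}-p\dot{q}^{-})+H\big),$$ $$P=(\alpha_{2}p^{-}+\alpha_{4}p)D(\eta^{-})+\nu^{-}(\alpha_{1}\dot{q}+\alpha_{2}\dot{q}^{-})-(\alpha_{2}p^{-}+\alpha_{4}p)\dot{q}^{-}D(\xi^{-})-\xi^{-}H_{t^-}-\eta^{-}H_{q^-}-\nu^{-}H_{p^-},$$ and $$\frac{\delta\tilde H}{\delta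 p}=\alpha_1\dot q^++(\alpha_2+\alpha_3)\dot q+\alpha_4\dot q^--\frac{\partial}{\partial p}(H+H^+),\qquad \frac{\delta\tilde H}{\delta q}=-\Big(\alpha_4\dot p^++(\alpha_2+\alpha_3)\dot p+\alpha_1\dot p^-+\frac{\partial}{\partial q}(H+H^+)\Big),$$ $$\frac{\delta\tilde H}{\delta t}=D\big[\alpha_2(p\dot q-p^-\dot q^-)+\alpha_4(p^+\dot q-p\dot q^-)\big]+D(H)-\frac{\partial}{\partial t}(H+H^+).$$
   Context: Fix a constant delay $\tau>0$; $t^\pm=t\pm\tau$, and for a function $f$ of $t$, $f^\pm=f(t\pm\tau)$. $S_+$ is the shift operator sending every variable to its value at the next point ($t^-\mapsto t$, $t\mapsto t^+$, $q^-\mapsto q$, $q\mapsto q^+$, similarly for $p$ and derivatives); $S_-$ is the backward shift; $\xi^\pm=S_\pm(\xi)$ etc. $H^+=S_+(H)=H(t^+,t,q^+,q,p^+,p)$. Subscripts on $H$ denote partial derivatives. $D$ is the total derivative acting on variables at the three points $t^-,t,t^+$: $D=\partial_t+\dot q\partial_q+\dot p\partial_p+\ddot q\partial_{\dot q}+\ddot p\partial_{\dot p}+\cdots$ plus analogous terms for the variables at $t^-$ and $t^+$. $\tilde H=p^{-}(\alpha_{1}\dot{q}+\alpha_{2}\dot{q}^{-})+p(\alpha_{3}\dot{q}+\alpha_{4}\dot{q}^{-})-H$. The quantity $\Omega$ equals $X(\tilde H)+\tilde H D(\xi)$ for the prolonged generator $X=\xi\partial_t+\eta\partial_q+\nu\partial_p+\dots$.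 *)

theory Defs
  imports "HOL-Analysis.Analysis"
begin

definition pd_t :: "(real \<Rightarrow> real \<Rightarrow> real \<Rightarrow> real \<Rightarrow> real \<Rightarrow> real \<Rightarrow> real) \<Rightarrow> real \<Rightarrow> real \<Rightarrow> real \<Rightarrow> real \<Rightarrow> real \<Rightarrow> real \<Rightarrow> real" where
  "pd_t H a b c d e f = deriv (\<lambda>x. H x b c d e f) a"
definition pd_tm :: "(real \<Rightarrow> real \<Rightarrow> real \<Rightarrow> real \<Rightarrow> real \<Rightarrow> real \<Rightarrow> real) \<Rightarrow> real \<Rightarrow> real \<Rightarrow> real \<Rightarrow> real \<Rightarrow> real \<Rightarrow> real \<Rightarrow> real" where
  "pd_tm H a b c d e f = deriv (\<lambda>x. H a x c d e f) b"
definition pd_q :: "(real \<Rightarrow> real \<Rightarrow> real \<Rightarrow> real \<Rightarrow> real \<Rightarrow> real \<Rightarrow> real) \<Rightarrow> real \<Rightarrow> real \<Rightarrow> real \<Rightarrow> real \<Rightarrow> real \<Rightarrow> real \<Rightarrow> real" where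
  "pd_q H a b c d e f = deriv (\<lambda>x. H a b x d e f) c"
definition pd_qm :: "(real \<Rightarrow> real \<Rightarrow> real \<Rightarrow> real \<Rightarrow> real \<Rightarrow> real \<Rightarrow> real) \<Rightarrow> real \<Rightarrow> real \<Rightarrow> real \<Rightarrow> real \<Rightarrow> real \<Rightarrow> real \<Rightarrow> real" where
  "pd_qm H a b c d e f = deriv (\<lambda>x. H a b c x e f) d"
definition pd_p :: "(real \<Rightarrow> real \<Rightarrow> real \<Rightarrow> real \<Rightarrow> real \<Rightarrow> real \<Rightarrow> real) \<Rightarrow> real \<Rightarrow> real \<Rightarrow> real \<Rightarrow> real \<Rightarrow> real \<Rightarrow> real \<Rightarrow> real" where
  "pd_p H a b c d e f = deriv (\<lambda>x. H a b c d x f) e"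
definition pd_pm :: "(real \<Rightarrow> real \<Rightarrow> real \<Rightarrow> real \<Rightarrow> real \<Rightarrow> real \<Rightarrow> real) \<Rightarrow> real \<Rightarrow> real \<Rightarrow> real \<Rightarrow> real \<Rightarrow> real \<Rightarrow> real \<Rightarrow> real" where
  "pd_pm H a b c d e f = deriv (\<lambda>x. H a b c d e x) f"

text \<open>Everything is evaluated along an arbitrary smooth curve (q(t), p(t)); the total
derivative D becomes the ordinary derivative in t, and S_+, S_- become
evaluation at t + tau, t - tau.\<close>

definition Hc where
  "Hc tau H q p t = H t (t - tau) (q t) (q (t - tau)) (p t) (p (t - tau))"

definition Hpd where
  "Hpd pd tau H q p t = pd H t (t - tau) (q t) (q (t - tau)) (p t) (p (t - tau))"

definition along :: "(real \<Rightarrow> real \<Rightarrow> real \<Rightarrow> real) \<Rightarrow> (real \<Rightarrow> real) \<Rightarrow> (real \<Rightarrow> real) \<Rightarrow> real \<Rightarrow> real" where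
  "along g q p t = g t (q t) (p t)"

definition Omega where
  "Omega tau a1 a2 a3 a4 H xi eta nu q p t =
    (let X = along xi q p; E = along eta q p; N = along nu q p;
         qd = deriv q; Hs = (\<lambda>pd. Hpd pd tau H q p t) in
     N (t - tau) * (a1 * qd t + a2 * qd (t - tau))
     + p (t - tau) * (a1 * deriv E t + a2 * deriv (\<lambda>s. E (s - tau)) t)
     + N t * (a3 * qd t + a4 * qd (t - tau))
     + p t * (a3 * deriv E t + a4 * deriv (\<lambda>s. E (s - tau)) t)
     + (a2 * p (t - tau) + a4 * p t) * qd (t - tau) * deriv (\<lambda>s. X s - X (s - tau)) t
     - X t * Hs pd_t - E t * Hs pd_q - N t * Hs pd_p
     - X (t - tau) * Hs pd_tm - E (t - tau) * Hs pd_qm - N (t - tau) * Hs pd_pm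
     - Hc tau H q p t * deriv X t)"

definition Cfun where
  "Cfun tau a1 a2 a3 a4 H xi eta q p t =
    (let X = along xi q p; E = along eta q p; qd = deriv q in
     E t * (a4 * p (t + tau) + (a2 + a3) * p t + a1 * p (t - tau))
     - X t * (a2 * (p t * qd t - p (t - tau) * qd (t - tau))
              + a4 * (p (t + tau) * qd t - p t * qd (t - tau)) + Hc tau H q p t))"

definition Pfun where
  "Pfun tau a1 a2 a4 H xi eta nu q p t =
    (let X = along xi q p; E = along eta q p; N = along nu q p;
         qd = deriv q; Hs = (\<lambda>pd. Hpd pd tau H q p t) in
     (a2 * p (t - tau) + a4 * p t) * deriv (\<lambda>s. E (s - tau)) t
     + N (t - tau) * (a1 * qd t + a2 * qd (t - tau))
     - (a2 * p (t - tau) + a4 * p t) * qd (t - tau) * deriv (\<lambda>s. X (s - tau)) t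
     - X (t - tau) * Hs pd_tm - E (t - tau) * Hs pd_qm - N (t - tau) * Hs pd_pm)"

definition varp where
  "varp tau a1 a2 a3 a4 H q p t =
    a1 * deriv q (t + tau) + (a2 + a3) * deriv q t + a4 * deriv q (t - tau)
    - (Hpd pd_p tau H q p t + Hpd pd_pm tau H q p (t + tau))"

definition varq where
  "varq tau a1 a2 a3 a4 H q p t =
    - (a4 * deriv p (t + tau) + (a2 + a3) * deriv p t + a1 * deriv p (t - tau)
       + Hpd pd_q tau H q p t + Hpd pd_qm tau H q p (t + tau))"

definition vart where
  "vart tau a2 a4 H q p t =
    deriv (\<lambda>s. a2 * (p s * deriv q s - p (s - tau) * deriv q (s - tau))
              + a4 * (p (s + tau) * deriv q s - p s * deriv q (s - tau))) t
    + deriv (Hc tau H q p) t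
    - (Hpd pd_t tau H q p t + Hpd pd_tm tau H q p (t + tau))"

end

theory Submission imports Defs begin

lemma D3:
  fixes g :: "real \<Rightarrow> real \<Rightarrow> real \<Rightarrow> real" and q p :: "real \<Rightarrow> real"
  assumes "\<And>z. (\<lambda>(a, b, c). g a b c) differentiable at z"
    and "\<And>t. q differentiable at t" and "\<And>t. p differentiable at t"
  shows "(\<lambda>s. g s (q s) (p s)) differentiable at t"
proof -
  have "(\<lambda>s. (s, q s, p s)) differentiable at t"
    using assms by (intro differentiable_Pair differentiable_ident) auto
  from differentiable_chain_at[OF this assms(1)]
  show ?thesis by (simp add: o_def)
qed

lemma D6:
  fixes H :: "real \<Rightarrow> real \<Rightarrow> real \<Rightarrow> real \<Rightarrow> real \<Rightarrow> real \<Rightarrow> real" and q p :: "real \<Rightarrow> real"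
  assumes "\<And>z. (\<lambda>(a, b, c, d, e, f). H a b c d e f) differentiable at z"
    and "\<And>t. q differentiable at t" and "\<And>t. p differentiable at t"
  shows "Hc tau H q p differentiable at t"
proof -
  have sh: "(\<lambda>s. f (s - tau)) differentiable at t" if "\<And>t. f differentiable at t" for f :: "real \<Rightarrow> real"
  proof -
    have "(\<lambda>s. s - tau) differentiable at t" by (intro derivative_intros)
    from differentiable_chain_at[OF this that] show ?thesis by (simp add: o_def)
  qed
  have "(\<lambda>s. (s, s - tau, q s, q (s - tau), p s, p (s - tau))) differentiable at t"
    using assms sh by (intro differentiable_Pair derivative_intros) auto
  from differentiable_chain_at[OF this assms(1)]
  show ?thesis by (simp add: o_def Hc_def[abs_def])
qed

lemma DD: "f differentiable at x \<Longrightarrow> (f has_real_derivative deriv f x) (at x)"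
  by (simp add: DERIV_deriv_iff_real_differentiable)

lemma Dsh: "(\<And>s. f differentiable at s) \<Longrightarrow> ((\<lambda>s. f (s + c)) has_real_derivative deriv f (x + c)) (at x)"
  using DERIV_shift DD by blast

lemma Dsh': "(\<And>s. f differentiable at s) \<Longrightarrow> ((\<lambda>s. f (s - c)) has_real_derivative deriv f (x - c)) (at x)"
  using Dsh[of f "-c" x] by simp

theorem lemma2:
  fixes tau a1 a2 a3 a4 :: real
    and H :: "real \<Rightarrow> real \<Rightarrow> real \<Rightarrow> real \<Rightarrow> real \<Rightarrow> real \<Rightarrow> real"
    and xi eta nu :: "real \<Rightarrow> real \<Rightarrow> real \<Rightarrow> real"
    and q p :: "real \<Rightarrow> real"
  assumes "tau > 0"
    and "\<And>z. (\<lambda>(a, b, c, d, e, f). H a b c d e f) differentiable at z"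
    and "\<And>z. (\<lambda>(a, b, c). xi a b c) differentiable at z"
    and "\<And>z. (\<lambda>(a, b, c). eta a b c) differentiable at z"
    and "\<And>z. (\<lambda>(a, b, c). nu a b c) differentiable at z"
    and "\<And>t. q differentiable at t"
    and "\<And>t. deriv q differentiable at t"
    and "\<And>t. p differentiable at t"
  shows "Omega tau a1 a2 a3 a4 H xi eta nu q p t =
           along xi q p t * vart tau a2 a4 H q p t
         + along eta q p t * varq tau a1 a2 a3 a4 H q p t
         + along nu q p t * varp tau a1 a2 a3 a4 H q p t
         + deriv (Cfun tau a1 a2 a3 a4 H xi eta q p) t
         + (Pfun tau a1 a2 a4 H xi eta nu q p t - Pfun tau a1 a2 a4 H xi eta nu q p (t + tau))"
proof -
  define X where "X = along xi q p"
  define E where "E = along eta q p"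
  define N where "N = along nu q p"
  define Hf where "Hf = Hc tau H q p"
  define B where "B = (\<lambda>s. a2 * (p s * deriv q s - p (s - tau) * deriv q (s - tau))
              + a4 * (p (s + tau) * deriv q s - p s * deriv q (s - tau)))"
  define K where "K = (\<lambda>s. a4 * p (s + tau) + (a2 + a3) * p s + a1 * p (s - tau))"
  have Xe: "X = (\<lambda>s. xi s (q s) (p s))" by (simp add: X_def along_def fun_eq_iff)
  have Ee: "E = (\<lambda>s. eta s (q s) (p s))" by (simp add: E_def along_def fun_eq_iff)
  have dX: "\<And>s. X differentiable at s" unfolding Xe by (rule D3[OF assms(3) assms(6) assms(8)])
  have dE: "\<And>s. E differentiable at s" unfolding Ee by (rule D3[OF assms(4) assms(6) assms(8)])
  have dH: "\<And>s. Hf differentiable at s" unfolding Hf_def by (rule D6[OF assms(2) assms(6) assms(8)])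
  have dp: "\<And>s. p differentiable at s" "\<And>s. deriv q differentiable at s" using assms by auto
  have dpm: "\<And>s. (\<lambda>s. p (s - tau)) differentiable at s" "\<And>s. (\<lambda>s. p (s + tau)) differentiable at s"
     "\<And>s. (\<lambda>s. deriv q (s - tau)) differentiable at s"
    using Dsh'[OF assms(8)] Dsh[OF assms(8)] Dsh'[OF assms(7)] real_differentiable_def by blast+
  have dB: "\<And>s. B differentiable at s" unfolding B_def
    by (intro differentiable_add differentiable_diff differentiable_mult differentiable_const dp dpm)
  have hK: "(K has_real_derivative (a4 * deriv p (t + tau) + (a2 + a3) * deriv p t + a1 * deriv p (t - tau))) (at t)"
    unfolding K_def
    by (intro DERIV_add DERIV_cmult Dsh'[OF assms(8)] Dsh[OF assms(8)] DD[OF assms(8)])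
  have C_eq: "Cfun tau a1 a2 a3 a4 H xi eta q p = (\<lambda>s. E s * K s - X s * (B s + Hf s))"
    by (rule ext) (simp add: Cfun_def Let_def E_def X_def K_def B_def Hf_def)
  have hC: "((\<lambda>s. E s * K s - X s * (B s + Hf s)) has_real_derivative
       (E t * (a4 * deriv p (t + tau) + (a2 + a3) * deriv p t + a1 * deriv p (t - tau)) + deriv E t * K t)
       - (X t * (deriv B t + deriv Hf t) + deriv X t * (B t + Hf t))) (at t)"
    by (intro DERIV_diff DERIV_mult' DERIV_add DD dX dE dB dH hK)
  have dC: "deriv (Cfun tau a1 a2 a3 a4 H xi eta q p) t = 
       (E t * (a4 * deriv p (t + tau) + (a2 + a3) * deriv p t + a1 * deriv p (t - tau)) + deriv E t * K t)
       - (X t * (deriv B t + deriv Hf t) + deriv X t * (B t + Hf t))"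
    unfolding C_eq by (rule DERIV_imp_deriv[OF hC])
  have sE: "\<And>x. deriv (\<lambda>s. E (s - tau)) x = deriv E (x - tau)"
    by (rule DERIV_imp_deriv, rule Dsh', rule dE)
  have sX: "\<And>x. deriv (\<lambda>s. X (s - tau)) x = deriv X (x - tau)"
    by (rule DERIV_imp_deriv, rule Dsh', rule dX)
  have sX2: "deriv (\<lambda>s. X s - X (s - tau)) t = deriv X t - deriv X (t - tau)"
    by (rule DERIV_imp_deriv, rule DERIV_diff[OF DD[OF dX] Dsh'[OF dX]])
  define h1 where "h1 = Hpd pd_t tau H q p t"
  define h2 where "h2 = Hpd pd_tm tau H q p t"
  define h3 where "h3 = Hpd pd_q tau H q p t"
  define h4 where "h4 = Hpd pd_qm tau H q p t"
  define h5 where "h5 = Hpd pd_p tau H q p t"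
  define h6 where "h6 = Hpd pd_pm tau H q p t"
  define g2 where "g2 = Hpd pd_tm tau H q p (t + tau)"
  define g4 where "g4 = Hpd pd_qm tau H q p (t + tau)"
  define g6 where "g6 = Hpd pd_pm tau H q p (t + tau)"
  have Om: "Omega tau a1 a2 a3 a4 H xi eta nu q p t =
     N (t - tau) * (a1 * deriv q t + a2 * deriv q (t - tau))
     + p (t - tau) * (a1 * deriv E t + a2 * deriv E (t - tau))
     + N t * (a3 * deriv q t + a4 * deriv q (t - tau))
     + p t * (a3 * deriv E t + a4 * deriv E (t - tau))
     + (a2 * p (t - tau) + a4 * p t) * deriv q (t - tau) * (deriv X t - deriv X (t - tau))
     - X t * h1 - E t * h3 - N t * h5
     - X (t - tau) * h2 - E (t - tau) * h4 - N (t - tau) * h6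
     - Hf t * deriv X t"
    unfolding Omega_def Let_def
    unfolding X_def[symmetric] E_def[symmetric] N_def[symmetric] Hf_def[symmetric]
    unfolding sE sX2 h1_def h2_def h3_def h4_def h5_def h6_def ..
  have P1: "Pfun tau a1 a2 a4 H xi eta nu q p t =
     (a2 * p (t - tau) + a4 * p t) * deriv E (t - tau)
     + N (t - tau) * (a1 * deriv q t + a2 * deriv q (t - tau))
     - (a2 * p (t - tau) + a4 * p t) * deriv q (t - tau) * deriv X (t - tau)
     - X (t - tau) * h2 - E (t - tau) * h4 - N (t - tau) * h6"
    unfolding Pfun_def Let_def
    unfolding X_def[symmetric] E_def[symmetric] N_def[symmetric]
    unfolding sE sX h2_def h4_def h6_def ..
  have P2: "Pfun tau a1 a2 a4 H xi eta nu q p (t + tau) =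
     (a2 * p t + a4 * p (t + tau)) * deriv E t
     + N t * (a1 * deriv q (t + tau) + a2 * deriv q t)
     - (a2 * p t + a4 * p (t + tau)) * deriv q t * deriv X t
     - X t * g2 - E t * g4 - N t * g6"
    unfolding Pfun_def Let_def
    unfolding X_def[symmetric] E_def[symmetric] N_def[symmetric]
    unfolding sE sX g2_def g4_def g6_def add_diff_cancel_right' ..
  have Vt: "vart tau a2 a4 H q p t = deriv B t + deriv Hf t - (h1 + g2)"
    unfolding vart_def B_def[symmetric] Hf_def[symmetric] h1_def g2_def ..
  have Vq: "varq tau a1 a2 a3 a4 H q p t = - (a4 * deriv p (t + tau) + (a2 + a3) * deriv p t + a1 * deriv p (t - tau)
       + h3 + g4)"
    unfolding varq_def h3_def g4_def ..
  have Vp: "varp tau a1 a2 a3 a4 H q p t = a1 * deriv q (t + tau) + (a2 + a3) * deriv q t + a4 * deriv q (t - tau)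
    - (h5 + g6)"
    unfolding varp_def h5_def g6_def ..
  have Bt: "B t = a2 * (p t * deriv q t - p (t - tau) * deriv q (t - tau))
              + a4 * (p (t + tau) * deriv q t - p t * deriv q (t - tau))"
    unfolding B_def ..
  show ?thesis
    unfolding Om P1 P2 Vt Vq Vp dC K_def Bt
    unfolding X_def[symmetric] E_def[symmetric] N_def[symmetric]
    by (simp add: algebra_simps)
qed

end
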